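(* Let $n=2p+1$ with $p\ge1$ an integer and let $1\le k\le p$. If $g$ is a smooth function defined on a neighbourhood of the origin in $\mathbb{R}^n$ which is spherically symmetric (i.e. $g(\vec x)=g(r)$ depends only on $r=|\vec x|$) and satisfies $(I-\Delta)^kg=0$, where $\Delta$ is the Laplacian on $\mathbb{R}^n$, then there are constants $c_{p-k+1},\dots,c_p$ such that \[g(r)=\sum_{i=p-k+1}^pc_i\tau_i(r).\]
   Context: The functions $\tau_i$ are defined by $\tau_0=\cosh$ and $\tau_{i+1}(r)=-\frac1r\tau_i'(r)$ for $r\ne0$, extended to even real-analytic functions on $\mathbb{R}$; $\tau_i(r)$ is regarded as the spherically symmetric function $\vec x\mapsto\tau_i(|\vec x|)$ on $\mathbb{R}^n$. *)

theory Defs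
  imports "HOL-Analysis.Analysis"
begin

fun tau :: "nat \<Rightarrow> real \<Rightarrow> real" where
  "tau 0 r = cosh r"
| "tau (Suc i) r =
     (if r = 0 then Lim (at 0) (\<lambda>s. - deriv (tau i) s / s)
      else - deriv (tau i) r / r)"

definition partial :: "'n::finite \<Rightarrow> (real^'n \<Rightarrow> real) \<Rightarrow> real^'n \<Rightarrow> real" where
  "partial j f x = deriv (\<lambda>t. f (x + t *\<^sub>R axis j 1)) 0"

definition laplacian :: "(real^'n::finite \<Rightarrow> real) \<Rightarrow> real^'n \<Rightarrow> real" where
  "laplacian f x = (\<Sum>j\<in>UNIV. partial j (partial j f) x)"

definition id_minus_lap :: "(real^'n::finite \<Rightarrow> real) \<Rightarrow> real^'n \<Rightarrow> real" where
  "id_minus_lap f x = f x - laplacian f x"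

fun Ck_on :: "nat \<Rightarrow> (real^'n::finite) set \<Rightarrow> (real^'n \<Rightarrow> real) \<Rightarrow> bool" where
  "Ck_on 0 U f = continuous_on U f"
| "Ck_on (Suc m) U f = (f differentiable_on U \<and> continuous_on U f \<and> (\<forall>j. Ck_on m U (partial j f)))"

definition smooth_on :: "(real^'n::finite) set \<Rightarrow> (real^'n \<Rightarrow> real) \<Rightarrow> bool" where
  "smooth_on U f = (\<forall>m. Ck_on m U f)"

end

theory Submission
  imports Defs
begin


fun bc :: "nat \<Rightarrow> nat \<Rightarrow> real" where
  "bc 0 j = 1 / fact (2*j)"
| "bc (Suc i) j = -2 * diffs (bc i) j"

lemma bc_bound: "\<bar>bc i j\<bar> \<le> 2^i / fact j"
proof (induction i arbitrary: j)
  case 0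
  have "fact j \<le> (fact (2*j) :: real)" by (rule fact_mono) auto
  then show ?case by (simp add: frac_le)
next
  case (Suc i)
  have "\<bar>bc (Suc i) j\<bar> = 2 * (Suc j) * \<bar>bc i (Suc j)\<bar>"
    by (simp add: diffs_def abs_mult)
  also have "\<dots> \<le> 2 * (Suc j) * (2^i / fact (Suc j))"
    using Suc[of "Suc j"] by (intro mult_left_mono) auto
  also have "\<dots> = 2^(Suc i) / fact j"
  proof -
    have "fact (Suc j) = (Suc j) * (fact j :: real)" by (simp only: fact_Suc of_nat_mult)
    moreover have "real (2 * Suc j) = 2 * real (Suc j)" by simp
    ultimately show ?thesis by (simp del: of_nat_Suc)
  qed
  finally show ?case .
qed

lemma bc_summable: "summable (\<lambda>j. bc i j * x^j)"
proof (rule summable_comparison_test')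
  show "summable (\<lambda>j. 2^i * (inverse (fact j) * \<bar>x\<bar>^j))"
    by (intro summable_mult summable_exp)
  fix j :: nat
  show "norm (bc i j * x^j) \<le> 2^i * (inverse (fact j) * \<bar>x\<bar>^j)"
  proof -
    have "\<bar>bc i j\<bar> * \<bar>x\<bar>^j \<le> 2^i / fact j * \<bar>x\<bar>^j"
      using bc_bound[of i j] by (intro mult_right_mono) auto
    then show ?thesis by (simp add: abs_mult power_abs divide_inverse mult_ac)
  qed
qed

definition P :: "nat \<Rightarrow> real \<Rightarrow> real" where
  "P i x = (\<Sum>j. bc i j * x^j)"

lemma P_deriv: "(P i has_real_derivative (-(1/2) * P (Suc i) x)) (at x)"
proof -
  have d: "(P i has_real_derivative (\<Sum>n. diffs (bc i) n * x^n)) (at x)"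
    unfolding P_def by (rule termdiffs_strong_converges_everywhere[OF bc_summable])
  have s: "summable (\<lambda>n. diffs (bc i) n * x^n)"
    using summable_mult[OF bc_summable[of "Suc i" x], of "-1/2"] by (simp add: algebra_simps)
  have "P (Suc i) x = (\<Sum>n. -2 * (diffs (bc i) n * x^n))"
    unfolding P_def by (simp add: algebra_simps)
  also have "\<dots> = -2 * (\<Sum>n. diffs (bc i) n * x^n)"
    by (rule suminf_mult[OF s])
  finally show ?thesis using d by simp
qed

lemma bc_ratio: "bc i j = (real j+1) * (4*real j + 4*real i + 2) * bc i (Suc j)"
proof (induction i arbitrary: j)
  case 0
  define X where "X = (real j+1) * (4*real j+2)"
  have ef: "fact (2 * Suc j) = (fact (2*j) :: real) * X"
  proof -
    have "2 * Suc j = Suc (Suc (2*j))" by simp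
    then show ?thesis unfolding X_def by (simp only: fact_Suc) (simp add: algebra_simps)
  qed
  have X: "X > 0" unfolding X_def by (rule mult_pos_pos) auto
  have F: "fact (2*j) > (0::real)" by auto
  have A: "bc 0 (Suc j) = 1 / (fact (2*j) * X)" by (simp only: bc.simps ef)
  have B: "(real j+1) * (4*real j + 4*real (0::nat) + 2) = X" unfolding X_def by simp
  have "(real j+1) * (4*real j + 4*real (0::nat) + 2) * bc 0 (Suc j) = X * (1 / (fact (2*j) * X))"
    by (simp only: A B)
  also have "\<dots> = 1 / fact (2*j)" using X F by simp
  also have "\<dots> = bc 0 j" by (simp only: bc.simps)
  finally show ?case by (rule sym)
next
  case (Suc i)
  have a: "bc (Suc i) j = -2 * (real j+1) * bc i (Suc j)" by (simp add: diffs_def algebra_simps)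
  have b: "bc (Suc i) (Suc j) = -2 * (real j+2) * bc i (Suc (Suc j))" by (simp add: diffs_def algebra_simps)
  have c: "bc i (Suc j) = (real j+2) * (4*real j + 4*real i + 6) * bc i (Suc (Suc j))"
    using Suc[of "Suc j"] by (simp add: algebra_simps)
  have e: "4*real j + 4*real (Suc i) + 2 = 4*real j + 4*real i + 6" by simp
  have "bc (Suc i) j = (real j+1) * (4*real j + 4*real i + 6) * bc (Suc i) (Suc j)"
    by (simp only: a b c) (simp add: algebra_simps)
  then show ?case by (simp only: e)
qed

lemma P_rec: "P i x = x * P (i+2) x - (2*i+1) * P (i+1) x"
proof -
  define f where "f j = bc i j * x^j + (2*i+1) * (bc (i+1) j * x^j)" for j
  have f0: "f 0 = 0"
    using bc_ratio[of i 0] by (simp add: f_def diffs_def algebra_simps)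
  have fS: "f (Suc j) = x * (bc (i+2) j * x^j)" for j
  proof -
    have a: "bc (i+2) j = 4*(real j+1)*(real j+2) * bc i (Suc (Suc j))"
      by (simp add: diffs_def numeral_2_eq_2 algebra_simps)
    have b: "bc (i+1) (Suc j) = -2*(real j+2) * bc i (Suc (Suc j))"
      by (simp add: diffs_def algebra_simps)
    have c0: "bc i (Suc j) = (real (Suc j)+1) * (4*real (Suc j) + 4*real i + 2) * bc i (Suc (Suc j))"
      by (rule bc_ratio)
    have c: "bc i (Suc j) = (real j+2) * (4*real j + 4*real i + 6) * bc i (Suc (Suc j))"
      unfolding c0 by (simp add: algebra_simps)
    have "f (Suc j) = bc i (Suc j) * x^Suc j + (2*i+1) * (bc (i+1) (Suc j) * x^Suc j)"
      by (simp only: f_def)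
    also have "\<dots> = x * (bc (i+2) j * x^j)"
      by (simp only: a b c) (simp add: algebra_simps)
    finally show ?thesis .
  qed
  have "(\<lambda>j. f (Suc j)) sums (x * P (i+2) x)"
    unfolding fS P_def by (rule sums_mult[OF summable_sums[OF bc_summable]])
  then have "f sums (x * P (i+2) x)" by (simp add: sums_Suc_iff f0)
  moreover have "f sums (P i x + (2*i+1) * P (i+1) x)"
    unfolding f_def P_def
    by (intro sums_add sums_mult summable_sums bc_summable)
  ultimately have "x * P (i+2) x = P i x + (2*i+1) * P (i+1) x" by (rule sums_unique2)
  moreover have "real (2*i+1) = 2*real i + 1" by simp
  ultimately show ?thesis by (metis add_diff_cancel_right')
qed

lemma bc_nz: "bc i j \<noteq> 0"
  by (induction i arbitrary: j) (auto simp: diffs_def)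

lemma P_0: "P i 0 = bc i 0"
  unfolding P_def using powser_zero[of "bc i"] by simp

lemma P_cosh: "P 0 (t^2) = cosh t"
proof -
  have f: "(\<lambda>j. bc 0 j * (t^2)^j) sums P 0 (t^2)"
    unfolding P_def by (rule summable_sums[OF bc_summable])
  have "(\<lambda>n. if even n then bc 0 (n div 2) * (t^2)^(n div 2) else (\<lambda>_. 0::real) ((n - 1) div 2)) sums (0 + P 0 (t^2))"
    by (rule sums_if[OF sums_zero f])
  moreover have "(\<lambda>n. if even n then bc 0 (n div 2) * (t^2)^(n div 2) else (\<lambda>_. 0::real) ((n - 1) div 2))
     = (\<lambda>n. if even n then t ^ n /\<^sub>R fact n else 0)"
  proof
    fix n :: nat
    show "(if even n then bc 0 (n div 2) * (t^2)^(n div 2) else (\<lambda>_. 0::real) ((n - 1) div 2))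
      = (if even n then t ^ n /\<^sub>R fact n else 0)"
    proof (cases "even n")
      case True
      then obtain m where "n = 2*m" by (auto elim: evenE)
      then show ?thesis by (simp add: power_mult[symmetric] divide_inverse mult.commute)
    qed simp
  qed
  ultimately have "(\<lambda>n. if even n then t ^ n /\<^sub>R fact n else 0) sums P 0 (t^2)" by simp
  then show ?thesis using cosh_converges sums_unique2 by blast
qed

lemma S_deriv: "((\<lambda>t. P i (t^2)) has_real_derivative (- t * P (Suc i) (t^2))) (at t)"
proof -
  have "((\<lambda>t. P i (t^2)) has_real_derivative (-(1/2) * P (Suc i) (t^2)) * (2 * t)) (at t)"
    by (rule DERIV_chain2[OF P_deriv]) (auto intro!: derivative_eq_intros)
  then show ?thesis by (simp add: mult.commute)
qed

lemma cont_S: "isCont (\<lambda>t. P i (t^2)) t"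
  using S_deriv DERIV_isCont by blast

lemma tau_P: "tau i t = P i (t^2)"
proof (induction i arbitrary: t)
  case 0
  then show ?case by (simp add: P_cosh)
next
  case (Suc i)
  have eq: "tau i = (\<lambda>t. P i (t^2))" using Suc by auto
  have dv: "deriv (tau i) s = - s * P (Suc i) (s^2)" for s
    unfolding eq by (rule DERIV_imp_deriv[OF S_deriv])
  show ?case
  proof (cases "t = 0")
    case True
    have "((\<lambda>s. P (Suc i) (s^2)) \<longlongrightarrow> P (Suc i) (0^2)) (at 0)"
      using cont_S[where i="Suc i" and t=0] by (simp add: isCont_def)
    moreover have ev: "eventually (\<lambda>s. P (Suc i) (s^2) = - deriv (tau i) s / s) (at 0)"
      by (auto simp: dv eventually_at intro!: exI[of _ 1])
    ultimately have "((\<lambda>s. - deriv (tau i) s / s) \<longlongrightarrow> P (Suc i) 0) (at 0)"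
      using Lim_transform_eventually by fastforce
    then show ?thesis using True by (simp add: tendsto_Lim)
  next
    case False
    then show ?thesis by (simp add: dv)
  qed
qed

lemma tau_deriv: "(tau i has_real_derivative (- t * tau (Suc i) t)) (at t)"
  unfolding tau_P[abs_def] by (rule S_deriv)

lemma tau_rec: "tau i t = t^2 * tau (i+2) t - (2*i+1) * tau (i+1) t"
  unfolding tau_P by (rule P_rec)

lemma tau_0_nz: "tau i 0 \<noteq> 0"
  by (simp add: tau_P P_0 bc_nz)



lemma pow_int_deriv: "((\<lambda>u. B * u ^ (N + 1) / real (N + 1)) has_real_derivative B * u ^ N) (at u)"
proof -
  have d: "((\<lambda>x. x^(N+1)) has_real_derivative real (N+1) * u^N) (at u)"
    using DERIV_pow[of "N+1" u] by simp
  have "((\<lambda>u. B * u ^ (N + 1) / real (N + 1)) has_real_derivative B * (real (N+1) * u^N) / real (N+1)) (at u)"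
    by (intro DERIV_cdivide DERIV_cmult d)
  then show ?thesis by simp
qed
lemma pow_int_deriv2: "((\<lambda>u. B * u ^ (q + 2) / ((real q+1)*(real q+2))) has_real_derivative B * u ^ (q + 1) / (real q + 1)) (at u)"
proof -
  have feq: "(\<lambda>u. B/(q+1) * u ^ (q+1+1) / real (q+1+1)) = (\<lambda>u. B * u ^ (q + 2) / ((real q+1)*(real q+2)))"
    by (auto simp: field_simps)
  have veq: "B/(q+1) * u ^ (q+1) = B * u ^ (q + 1) / (real q + 1)" by simp
  show ?thesis using pow_int_deriv[of "B/(q+1)" "q+1" u] by (simp only: feq veq)
qed

lemma bound_by_deriv:
  fixes f F f' g :: "real \<Rightarrow> real"
  assumes t: "0 \<le> t" and cf: "continuous_on {0..t} f" and cF: "continuous_on {0..t} F"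
    and f0: "f 0 = 0" and F0: "F 0 = 0"
    and df: "\<And>u. 0<u \<Longrightarrow> u<t \<Longrightarrow> (f has_real_derivative f' u) (at u)"
    and dF: "\<And>u. 0<u \<Longrightarrow> u<t \<Longrightarrow> (F has_real_derivative g u) (at u)"
    and b: "\<And>u. 0<u \<Longrightarrow> u<t \<Longrightarrow> \<bar>f' u\<bar> \<le> g u"
  shows "\<bar>f t\<bar> \<le> F t"
proof -
  have "(\<lambda>u. f u - F u) 0 \<ge> (\<lambda>u. f u - F u) t"
  proof (rule DERIV_nonpos_imp_decreasing_open[OF t])
    fix u assume u: "0 < u" "u < t"
    show "\<exists>y. ((\<lambda>u. f u - F u) has_real_derivative y) (at u) \<and> y \<le> 0"
      using DERIV_diff[OF df[OF u] dF[OF u]] b[OF u] by (intro exI[of _ "f' u - g u"]) auto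
  qed (intro continuous_intros cf cF)
  moreover have "(\<lambda>u. - f u - F u) 0 \<ge> (\<lambda>u. - f u - F u) t"
  proof (rule DERIV_nonpos_imp_decreasing_open[OF t])
    fix u assume u: "0 < u" "u < t"
    show "\<exists>y. ((\<lambda>u. - f u - F u) has_real_derivative y) (at u) \<and> y \<le> 0"
      using DERIV_diff[OF DERIV_minus[OF df[OF u]] dF[OF u]] b[OF u] by (intro exI[of _ "- f' u - g u"]) auto
  qed (intro continuous_intros cf cF)
  ultimately show ?thesis using f0 F0 by auto
qed

lemma uniq:
  fixes w dw ddw :: "real \<Rightarrow> real" and a :: nat and \<epsilon> :: real
  assumes a: "a \<ge> 1"
    and d0: "\<And>t. 0 \<le> t \<Longrightarrow> t < \<epsilon> \<Longrightarrow> (w has_real_derivative dw t) (at t)"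
    and d1: "\<And>t. 0 < t \<Longrightarrow> t < \<epsilon> \<Longrightarrow> (dw has_real_derivative ddw t) (at t)"
    and ode: "\<And>t. 0 < t \<Longrightarrow> t < \<epsilon> \<Longrightarrow> t * ddw t + a * dw t = t * w t"
    and c0: "isCont dw 0"
    and w0: "w 0 = 0"
    and t0: "0 \<le> t0" "t0 < \<epsilon>"
  shows "w t0 = 0"
proof -
  define R where "R = t0"
  have R: "0 \<le> R" "R < \<epsilon>" using t0 by (auto simp: R_def)
  have cw: "continuous_on {0..R} w"
    using R by (intro continuous_at_imp_continuous_on ballI DERIV_isCont[OF d0]) auto
  obtain M where M: "\<And>u. u \<in> {0..R} \<Longrightarrow> \<bar>w u\<bar> \<le> M"
    using compact_imp_bounded[OF compact_continuous_image[OF cw compact_Icc]]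
    unfolding bounded_iff by force
  have M0: "M \<ge> 0" using M[of 0] R by auto
  have cw1: "continuous_on {0..t} dw" if "t \<le> R" for t
  proof (intro continuous_at_imp_continuous_on ballI)
    fix u assume u: "u \<in> {0..t}"
    show "isCont dw u"
    proof (cases "u = 0")
      case True then show ?thesis using c0 by simp
    next
      case False then show ?thesis using u that R by (intro DERIV_isCont[OF d1]) auto
    qed
  qed
  have claim: "\<forall>t\<in>{0..R}. \<bar>w t\<bar> \<le> M * t^(2*m) / fact (2*m)" for m
  proof (induction m)
    case 0
    then show ?case using M by simp
  next
    case (Suc m)
    define B where "B = M / fact (2*m)"
    define q where "q = 2*m"
    have B0: "B \<ge> 0" using M0 by (simp add: B_def)
    have hyp: "\<bar>w u\<bar> \<le> B * u^q" if "u \<in> {0..R}" for u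
      using Suc that by (simp add: B_def q_def)
    have step1: "\<bar>dw t\<bar> \<le> B * t^(q+1) / (q+1)" if t: "0 < t" "t \<le> R" for t
    proof -
      have "\<bar>(\<lambda>u. u^a * dw u) t\<bar> \<le> (\<lambda>u. B * u ^ (a + q + 1) / real (a + q + 1)) t"
      proof (rule bound_by_deriv[where f="\<lambda>u. u^a * dw u" and F="\<lambda>u. B * u ^ (a + q + 1) / real (a + q + 1)" and f'="\<lambda>u. u^a * w u" and g="\<lambda>u. B * u^(a+q)"])
        show "continuous_on {0..t} (\<lambda>u. u ^ a * dw u)"
          using cw1[OF t(2)] by (intro continuous_intros)
        show "continuous_on {0..t} (\<lambda>u. B * u ^ (a + q + 1) / real (a + q + 1))"
          by (intro continuous_intros) auto
        fix u assume u: "0 < u" "u < t"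
        have "((\<lambda>u. u^a * dw u) has_real_derivative (a * u^(a-1) * dw u + u^a * ddw u)) (at u)"
          using DERIV_mult[OF DERIV_pow[of a u] d1[of u]] u t R by (simp add: mult.commute)
        moreover have "a * u^(a-1) * dw u + u^a * ddw u = u^a * w u"
        proof -
          have "u^a = u * u^(a-1)" using a by (simp add: power_eq_if)
          then have "u^a * ddw u = u^(a-1) * (u * ddw u)" by simp
          moreover have "u * ddw u = u * w u - a * dw u" using ode[of u] u t R by auto
          ultimately have "a * u^(a-1) * dw u + u^a * ddw u = u^(a-1) * (u * w u)"
            by (simp add: algebra_simps)
          also have "\<dots> = u^a * w u" using \<open>u^a = u * u^(a-1)\<close> by simp
          finally show ?thesis .
        qed
        ultimately show "((\<lambda>u. u^a * dw u) has_real_derivative u^a * w u) (at u)" by simp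
        show "((\<lambda>u. B * u ^ (a + q + 1) / real (a + q + 1)) has_real_derivative B * u ^ (a + q)) (at u)"
          by (rule pow_int_deriv)
        have "\<bar>u^a * w u\<bar> \<le> u^a * (B * u^q)"
          using hyp[of u] u t by (simp add: abs_mult)
        moreover have "u^a * (B * u^q) = B * u ^ (a + q)" by (simp add: power_add mult_ac)
        ultimately show "\<bar>u ^ a * w u\<bar> \<le> B * u ^ (a + q)" by simp
      qed (use t a in auto)
      moreover have "\<bar>(\<lambda>u. u^a * dw u) t\<bar> = t^a * \<bar>dw t\<bar>" using t by (simp add: abs_mult)
      moreover have "(\<lambda>u. B * u ^ (a + q + 1) / real (a + q + 1)) t = t^a * (B * t^(q+1) / (a+q+1))"
        by (simp add: power_add mult_ac)
      ultimately have "t^a * \<bar>dw t\<bar> \<le> t^a * (B * t^(q+1) / (a+q+1))" by linarith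
      then have "\<bar>dw t\<bar> \<le> B * t^(q+1) / (a+q+1)" using t by (metis mult_le_cancel_left_pos zero_less_power)
      also have "\<dots> \<le> B * t^(q+1) / (q+1)"
        using t B0 by (intro divide_left_mono mult_nonneg_nonneg) auto
      finally show ?thesis .
    qed
    show ?case
    proof
      fix t assume t: "t \<in> {0..R}"
      have "\<bar>w t\<bar> \<le> (\<lambda>u. B * u^(q+2) / ((real q+1)*(real q+2))) t"
      proof (rule bound_by_deriv[where f=w and F="\<lambda>u. B * u ^ (q + 2) / ((real q+1)*(real q+2))" and f'="dw" and g="\<lambda>u. B * u^(q+1) / (real q+1)"])
        show "continuous_on {0..t} w" using cw t by (auto intro: continuous_on_subset)
        show "continuous_on {0..t} (\<lambda>u. B * u ^ (q + 2) / ((real q+1)*(real q+2)))"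
          by (intro continuous_intros) auto
        fix u assume u: "0 < u" "u < t"
        show "(w has_real_derivative dw u) (at u)" using d0[of u] u t R by auto
        show "((\<lambda>u. B * u ^ (q + 2) / ((real q+1)*(real q+2))) has_real_derivative B * u ^ (q + 1) / (real q + 1)) (at u)"
          by (rule pow_int_deriv2)
        show "\<bar>dw u\<bar> \<le> B * u ^ (q + 1) / (real q + 1)" using step1[of u] u t by (auto simp: add.commute)
      qed (use t w0 in auto)
      also have "\<dots> = M * t ^ (2 * Suc m) / fact (2 * Suc m)"
      proof -
        have "fact (2 * Suc m) = fact (2*m) * ((q+1)*(q+2) :: real)"
        proof -
          have "2 * Suc m = Suc (Suc (2*m))" by simp
          then show ?thesis by (simp only: fact_Suc q_def) (simp add: algebra_simps)
        qed
        moreover have "2 * Suc m = q + 2" by (simp add: q_def)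
        ultimately show ?thesis by (simp add: B_def algebra_simps)
      qed
      finally show "\<bar>w t\<bar> \<le> M * t ^ (2 * Suc m) / fact (2 * Suc m)" .
    qed
  qed
  have bnd: "\<bar>w t0\<bar> \<le> M * (inverse (fact m) * (t0^2)^m)" for m
  proof -
    have "\<bar>w t0\<bar> \<le> M * t0^(2*m) / fact (2*m)" using claim[of m] R by (auto simp: R_def)
    also have "\<dots> \<le> M * t0^(2*m) / fact m"
      using M0 t0 by (intro divide_left_mono fact_mono) auto
    also have "\<dots> = M * (inverse (fact m) * (t0^2)^m)" by (simp add: power_mult divide_inverse)
    finally show ?thesis .
  qed
  have "(\<lambda>m. M * (inverse (fact m) * (t0^2)^m)) \<longlonglongrightarrow> M * 0"
    by (intro tendsto_mult_left summable_LIMSEQ_zero summable_exp)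
  then have "\<bar>w t0\<bar> \<le> M * 0"
    by (rule LIMSEQ_le_const) (use bnd in auto)
  then show ?thesis by simp
qed



lemma ev_line:
  fixes x v :: "'a::real_normed_vector"
  assumes "open U" "x \<in> U"
  shows "eventually (\<lambda>s::real. x + s *\<^sub>R v \<in> U) (nhds 0)"
proof -
  have "((\<lambda>s::real. x + s *\<^sub>R v) \<longlongrightarrow> x + 0 *\<^sub>R v) (at 0)"
    by (intro tendsto_intros)
  then have "eventually (\<lambda>s::real. x + s *\<^sub>R v \<in> U) (at 0)"
    using assms by (intro topological_tendstoD) auto
  then show ?thesis using assms unfolding eventually_nhds_conv_at by simp
qed

lemma partial_cong:
  assumes "open U" "x \<in> U" "\<And>y. y \<in> U \<Longrightarrow> f y = g y"
  shows "partial j f x = partial j g x"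
  unfolding partial_def
  by (rule deriv_cong_ev[OF eventually_mono[OF ev_line[OF assms(1,2), of "axis j 1"]]]) (auto simp: assms(3))

lemma partial_deriv:
  fixes f :: "real^'n \<Rightarrow> real"
  assumes "f differentiable (at x)"
  shows "((\<lambda>t. f (x + t *\<^sub>R axis j 1)) has_real_derivative partial j f x) (at 0)"
proof -
  obtain f' where f': "(f has_derivative f') (at x)" using assms by (auto simp: differentiable_def)
  have l: "((\<lambda>t::real. x + t *\<^sub>R axis j 1) has_derivative (\<lambda>t. t *\<^sub>R axis j 1)) (at 0)"
    by (auto intro!: derivative_eq_intros)
  have f2: "(f has_derivative f') (at ((\<lambda>t::real. x + t *\<^sub>R axis j 1) 0))" using f' by simp
  have c: "((f \<circ> (\<lambda>t. x + t *\<^sub>R axis j 1)) has_derivative (f' \<circ> (\<lambda>t. t *\<^sub>R axis j 1))) (at 0)"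
    by (rule diff_chain_at[OF l f2])
  have lin: "linear f'" using f' has_derivative_linear by blast
  have "(f' \<circ> (\<lambda>t. t *\<^sub>R axis j 1)) = (*) (f' (axis j 1))"
    by (auto simp: linear_scale[OF lin])
  with c have d: "((\<lambda>t. f (x + t *\<^sub>R axis j 1)) has_real_derivative f' (axis j 1)) (at 0)"
    by (simp add: has_field_derivative_def comp_def)
  then have "partial j f x = f' (axis j 1)"
    unfolding partial_def by (rule DERIV_imp_deriv)
  with d show ?thesis by simp
qed

lemma line_deriv:
  fixes f :: "real^'n \<Rightarrow> real"
  assumes "f differentiable (at (t *\<^sub>R axis j 1))"
  shows "((\<lambda>s. f (s *\<^sub>R axis j 1)) has_real_derivative partial j f (t *\<^sub>R axis j 1)) (at t)"
proof -
  have "((\<lambda>s. f (t *\<^sub>R axis j 1 + s *\<^sub>R axis j 1)) has_real_derivative partial j f (t *\<^sub>R axis j 1)) (at 0)"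
    by (rule partial_deriv[OF assms])
  moreover have "(\<lambda>s. f (t *\<^sub>R axis j 1 + s *\<^sub>R axis j 1)) = (\<lambda>s. (\<lambda>s. f (s *\<^sub>R axis j 1)) (s + t))"
    by (auto simp: scaleR_left_distrib add.commute)
  ultimately have "((\<lambda>s. (\<lambda>s. f (s *\<^sub>R axis j 1)) (s + t)) has_real_derivative partial j f (t *\<^sub>R axis j 1)) (at 0)"
    by simp
  then show ?thesis using DERIV_shift[of "\<lambda>s. f (s *\<^sub>R axis j 1)" _ 0 t] by simp
qed

lemma Ck_cong:
  fixes f g :: "real^'n \<Rightarrow> real"
  assumes "open U" "\<And>y. y \<in> U \<Longrightarrow> f y = g y" "Ck_on m U f"
  shows "Ck_on m U g"
  using assms(2,3)
proof (induction m arbitrary: f g)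
  case 0
  then show ?case using continuous_on_cong by force
next
  case (Suc m)
  have "g differentiable_on U"
    unfolding differentiable_on_eq_differentiable_at[OF assms(1)]
  proof
    fix x assume x: "x \<in> U"
    then have "f differentiable (at x)"
      using Suc.prems differentiable_on_eq_differentiable_at[OF assms(1)] by auto
    then obtain f' where "(f has_derivative f') (at x)" by (auto simp: differentiable_def)
    then have "(g has_derivative f') (at x)"
      by (rule has_derivative_transform_within_open[OF _ assms(1) x]) (use Suc.prems in auto)
    then show "g differentiable (at x)" by (auto simp: differentiable_def)
  qed
  moreover have "continuous_on U g" using Suc.prems continuous_on_cong by force
  moreover have "Ck_on m U (partial j g)" for j
  proof (rule Suc.IH[of "partial j f"])
    show "Ck_on m U (partial j f)" using Suc.prems by simp
    fix y assume "y \<in> U"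
    then show "partial j f y = partial j g y" by (rule partial_cong[OF assms(1)]) (use Suc.prems in auto)
  qed
  ultimately show ?case by simp
qed

lemma partial_lin:
  fixes f g :: "real^'n \<Rightarrow> real"
  assumes "f differentiable (at x)" "g differentiable (at x)"
  shows "partial j (\<lambda>y. a * f y + b * g y) x = a * partial j f x + b * partial j g x"
proof -
  have "((\<lambda>t. a * f (x + t *\<^sub>R axis j 1) + b * g (x + t *\<^sub>R axis j 1)) has_real_derivative
     a * partial j f x + b * partial j g x) (at 0)"
    by (intro DERIV_add DERIV_cmult partial_deriv assms)
  then show ?thesis unfolding partial_def[of j "\<lambda>y. a * f y + b * g y"] by (rule DERIV_imp_deriv)
qed

lemma Ck_lin:
  fixes f g :: "real^'n \<Rightarrow> real"
  assumes "open U"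
  shows "Ck_on m U f \<Longrightarrow> Ck_on m U g \<Longrightarrow> Ck_on m U (\<lambda>y. a * f y + b * g y)"
proof (induction m arbitrary: f g)
  case 0
  then show ?case by (auto intro!: continuous_intros)
next
  case (Suc m)
  have df: "f differentiable_on U" "g differentiable_on U" using Suc.prems by auto
  have "(\<lambda>y. a * f y + b * g y) differentiable_on U"
    using df by (auto intro!: derivative_intros)
  moreover have "continuous_on U (\<lambda>y. a * f y + b * g y)"
    using Suc.prems by (auto intro!: continuous_intros)
  moreover have "Ck_on m U (partial j (\<lambda>y. a * f y + b * g y))" for j
  proof (rule Ck_cong[OF assms])
    show "Ck_on m U (\<lambda>y. a * partial j f y + b * partial j g y)"
      using Suc by simp
    fix y assume y: "y \<in> U"
    have fd: "f differentiable (at y)" "g differentiable (at y)"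
      using y df differentiable_on_eq_differentiable_at[OF assms] by auto
    show "a * partial j f y + b * partial j g y = partial j (\<lambda>y. a * f y + b * g y) y"
      using partial_lin[OF fd, of j a b] by simp
  qed
  ultimately show ?case by simp
qed

lemma partial_zero: "partial j (\<lambda>y. 0) = (\<lambda>y. 0)"
  by (auto simp: partial_def)

lemma Ck_zero: "Ck_on m U (\<lambda>y. 0)"
  by (induction m) (auto simp: partial_zero)

lemma Ck_sum:
  fixes F :: "'i \<Rightarrow> real^'n \<Rightarrow> real"
  assumes "open U" "finite S" "\<And>i. i \<in> S \<Longrightarrow> Ck_on m U (F i)"
  shows "Ck_on m U (\<lambda>y. \<Sum>i\<in>S. F i y)"
  using assms(2,3)
proof (induction S rule: finite_induct)
  case empty
  then show ?case using Ck_zero by simp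
next
  case (insert i S)
  have "Ck_on m U (\<lambda>y. 1 * F i y + 1 * (\<Sum>i\<in>S. F i y))"
    using insert by (intro Ck_lin[OF assms(1)]) auto
  then show ?case using insert by simp
qed

lemma smooth_L:
  fixes f :: "real^'n \<Rightarrow> real"
  assumes "open U" "smooth_on U f"
  shows "smooth_on U (id_minus_lap f)"
  unfolding smooth_on_def
proof
  fix m
  have e: "id_minus_lap f = (\<lambda>y. 1 * f y + (-1) * (\<Sum>j\<in>UNIV. partial j (partial j f) y))"
    by (auto simp: id_minus_lap_def laplacian_def)
  have "Ck_on (Suc (Suc m)) U f" using assms(2) by (simp add: smooth_on_def)
  then have "Ck_on m U (partial j (partial j f))" for j by simp
  then show "Ck_on m U (id_minus_lap f)" unfolding e
    using assms(2) by (intro Ck_lin[OF assms(1)] Ck_sum[OF assms(1)]) (auto simp: smooth_on_def)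
qed

lemma smooth_iter:
  fixes g :: "real^'n \<Rightarrow> real"
  assumes "open U" "smooth_on U g"
  shows "smooth_on U ((id_minus_lap ^^ j) g)"
  by (induction j) (auto simp: assms smooth_L)

lemma norm_line_deriv:
  fixes x :: "real^'n"
  assumes "x \<noteq> 0"
  shows "((\<lambda>s. norm (x + s *\<^sub>R axis j 1)) has_real_derivative (x$j / norm x)) (at 0)"
proof -
  have l: "((\<lambda>t::real. x + t *\<^sub>R axis j 1) has_derivative (\<lambda>t. t *\<^sub>R axis j 1)) (at 0)"
    by (auto intro!: derivative_eq_intros)
  have n: "(norm has_derivative (\<lambda>h. inner h (sgn x))) (at ((\<lambda>t::real. x + t *\<^sub>R axis j 1) 0))"
    using has_derivative_norm[OF assms] by simp
  have c: "((norm \<circ> (\<lambda>t. x + t *\<^sub>R axis j 1)) has_derivative ((\<lambda>h. inner h (sgn x)) \<circ> (\<lambda>t. t *\<^sub>R axis j 1))) (at 0)"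
    by (rule diff_chain_at[OF l n])
  have "((\<lambda>h. inner h (sgn x)) \<circ> (\<lambda>t. t *\<^sub>R axis j 1)) = (*) (x$j / norm x)"
    by (auto simp: inner_axis' sgn_div_norm divide_inverse mult_ac)
  with c show ?thesis by (simp add: has_field_derivative_def comp_def)
qed

lemma radial_partial:
  fixes f :: "real^'n \<Rightarrow> real"
  assumes U: "open U" "x \<in> U" "x \<noteq> 0" and rad: "\<And>y. y \<in> U \<Longrightarrow> f y = h (norm y)"
    and hd: "(h has_real_derivative h1) (at (norm x))"
  shows "partial j f x = h1 * x$j / norm x"
proof -
  have "partial j f x = partial j (\<lambda>y. h (norm y)) x"
    by (rule partial_cong[OF U(1,2)]) (use rad in auto)
  also have "\<dots> = h1 * (x$j / norm x)"
    unfolding partial_def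
  proof (rule DERIV_imp_deriv)
    have "(h has_real_derivative h1) (at (norm (x + 0 *\<^sub>R axis j 1)))" using hd by simp
    then show "((\<lambda>t. h (norm (x + t *\<^sub>R axis j 1))) has_real_derivative h1 * (x $ j / norm x)) (at 0)"
      by (rule DERIV_chain2[OF _ norm_line_deriv[OF U(3)]])
  qed
  finally show ?thesis by simp
qed

lemma radial_partial2:
  fixes f :: "real^'n \<Rightarrow> real"
  assumes U: "open U" "x \<in> U" "x \<noteq> 0"
    and rad: "\<And>y. y \<in> U \<Longrightarrow> y \<noteq> 0 \<Longrightarrow> pf y = h1 (norm y) * y$j / norm y"
    and hd: "(h1 has_real_derivative h2) (at (norm x))"
  shows "partial j pf x = h2 * (x$j / norm x)^2 + h1 (norm x) * (1 / norm x - (x$j)^2 / (norm x)^3)"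
proof -
  define r where "r = norm x"
  have r: "r > 0" using U(3) by (simp add: r_def)
  have "partial j pf x = partial j (\<lambda>y. h1 (norm y) * y$j / norm y) x"
    by (rule partial_cong[of "U - {0}"]) (use U rad in auto)
  also have "\<dots> = ((h2 * (x$j / r) * (x$j) + h1 r * 1) * r - h1 r * x$j * (x$j / r)) / (r * r)"
    unfolding partial_def
  proof (rule DERIV_imp_deriv)
    have N: "((\<lambda>s. norm (x + s *\<^sub>R axis j 1)) has_real_derivative (x$j / r)) (at 0)"
      unfolding r_def by (rule norm_line_deriv[OF U(3)])
    have "(h1 has_real_derivative h2) (at (norm (x + 0 *\<^sub>R axis j 1)))" using hd by simp
    then have H: "((\<lambda>s. h1 (norm (x + s *\<^sub>R axis j 1))) has_real_derivative h2 * (x$j / r)) (at 0)"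
      by (rule DERIV_chain2[OF _ N])
    have C: "((\<lambda>s. (x + s *\<^sub>R axis j 1)$j) has_real_derivative 1) (at 0)"
      by (simp, intro derivative_eq_intros) auto
    have nz: "norm (x + 0 *\<^sub>R axis j 1) \<noteq> 0" using U(3) by simp
    note DERIV_divide[OF DERIV_mult[OF H C] N nz]
    then show "((\<lambda>t. h1 (norm (x + t *\<^sub>R axis j 1)) * (x + t *\<^sub>R axis j 1) $ j / norm (x + t *\<^sub>R axis j 1))
        has_real_derivative ((h2 * (x$j / r) * (x$j) + h1 r * 1) * r - h1 r * x$j * (x$j / r)) / (r * r)) (at 0)"
      by (simp add: r_def)
  qed
  also have "\<dots> = h2 * (x$j / r)^2 + h1 r * (1 / r - (x$j)^2 / r^3)"
    using r by (simp add: field_simps power2_eq_square power3_eq_cube)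
  finally show ?thesis by (simp add: r_def)
qed

lemma sum_sq_comp: "(\<Sum>j\<in>UNIV. (x$j)^2) = (norm (x::real^'n))^2"
  unfolding power2_norm_eq_inner by (simp add: inner_vec_def power2_eq_square)

lemma lap_radial:
  fixes f :: "real^'n \<Rightarrow> real"
  assumes U: "open U" "x \<in> U" "x \<noteq> 0" and rad: "\<And>y. y \<in> U \<Longrightarrow> f y = h (norm y)"
    and hd: "\<And>y. y \<in> U \<Longrightarrow> y \<noteq> 0 \<Longrightarrow> (h has_real_derivative h1 (norm y)) (at (norm y))"
    and hd2: "(h1 has_real_derivative h2) (at (norm x))"
  shows "laplacian f x = h2 + (real CARD('n) - 1) / norm x * h1 (norm x)"
proof -
  define r where "r = norm x"
  have r: "r > 0" using U(3) by (simp add: r_def)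
  have "partial j (partial j f) x = h2 / r^2 * (x$j)^2 + h1 r / r - h1 r / r^3 * (x$j)^2" for j
  proof -
    have "partial j (partial j f) x = h2 * (x$j / r)^2 + h1 r * (1 / r - (x$j)^2 / r^3)"
      unfolding r_def
    proof (rule radial_partial2[OF U _ hd2])
      fix y assume "y \<in> U" "y \<noteq> 0"
      then show "partial j f y = h1 (norm y) * y $ j / norm y"
        by (intro radial_partial[OF U(1) _ _ rad hd])
    qed
    then show ?thesis by (simp add: field_simps power2_eq_square)
  qed
  then have "laplacian f x = (\<Sum>j\<in>UNIV. h2 / r^2 * (x$j)^2 + h1 r / r - h1 r / r^3 * (x$j)^2)"
    by (simp add: laplacian_def)
  also have "\<dots> = h2 / r^2 * (\<Sum>j\<in>UNIV. (x$j)^2) + real CARD('n) * (h1 r / r) - h1 r / r^3 * (\<Sum>j\<in>UNIV. (x$j)^2)"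
    by (simp add: sum.distrib sum_subtractf sum_distrib_left)
  also have "\<dots> = h2 + (real CARD('n) - 1) / r * h1 r"
    unfolding sum_sq_comp r_def[symmetric] using r
    by (simp add: field_simps power2_eq_square power3_eq_cube)
  finally show ?thesis by (simp add: r_def)
qed



declare tau.simps[simp del]


lemma T1_deriv: "((\<lambda>t. - t * tau (Suc i) t) has_real_derivative
   (- tau (Suc i) t + t^2 * tau (Suc (Suc i)) t)) (at t)"
proof -
  note DERIV_mult[OF DERIV_minus[OF DERIV_ident] tau_deriv[of "Suc i" t]]
  then show ?thesis by (simp add: power2_eq_square mult_ac)
qed

lemma tau_ode: "t * (- tau (Suc i) t + t^2 * tau (Suc (Suc i)) t) + (2*real p) * (- t * tau (Suc i) t)
   = t * (tau i t - (2*real p - 2*real i) * tau (Suc i) t)"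
proof -
  have r: "tau i t = t^2 * tau (Suc (Suc i)) t - (2*real i+1) * tau (Suc i) t"
    using tau_rec[of i t] by (simp add: numeral_2_eq_2)
  show ?thesis by (simp add: r algebra_simps)
qed

lemma assemble:
  fixes h H1 H2 :: "nat \<Rightarrow> real \<Rightarrow> real" and p k :: nat and \<epsilon> :: real
  assumes k: "1 \<le> k" "k \<le> p" and eps: "\<epsilon> > 0"
    and dh: "\<And>j t. \<bar>t\<bar> < \<epsilon> \<Longrightarrow> (h j has_real_derivative H1 j t) (at t)"
    and dH: "\<And>j t. \<bar>t\<bar> < \<epsilon> \<Longrightarrow> (H1 j has_real_derivative H2 j t) (at t)"
    and rec: "\<And>j t. 0 < t \<Longrightarrow> t < \<epsilon> \<Longrightarrow> h (Suc j) t = h j t - H2 j t - (2*real p) / t * H1 j t"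
    and hk: "\<And>t. 0 \<le> t \<Longrightarrow> t < \<epsilon> \<Longrightarrow> h k t = 0"
  shows "\<exists>c. \<forall>t. 0 \<le> t \<longrightarrow> t < \<epsilon> \<longrightarrow> h 0 t = (\<Sum>i = p - k + 1..p. c i * tau i t)"
proof -
  define T1 where "T1 i t = - t * tau (Suc i) t" for i t
  define T2 where "T2 i t = - tau (Suc i) t + t^2 * tau (Suc (Suc i)) t" for i t
  have dT0: "(tau i has_real_derivative T1 i t) (at t)" for i t
    unfolding T1_def by (rule tau_deriv)
  have dT1: "(T1 i has_real_derivative T2 i t) (at t)" for i t
    unfolding T1_def[abs_def] T2_def by (rule T1_deriv)
  have claim: "m \<le> k \<Longrightarrow> \<exists>c. \<forall>t. 0 \<le> t \<longrightarrow> t < \<epsilon> \<longrightarrow> h (k - m) t = (\<Sum>i = p - m + 1..p. c i * tau i t)" for m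
  proof (induction m)
    case 0
    then show ?case using hk by auto
  next
    case (Suc m)
    then obtain c where c: "\<And>t. 0 \<le> t \<Longrightarrow> t < \<epsilon> \<Longrightarrow> h (k - m) t = (\<Sum>i = p - m + 1..p. c i * tau i t)"
      by auto
    define j where "j = k - Suc m"
    have jS: "Suc j = k - m" using Suc.prems by (simp add: j_def)
    define S where "S = {p - m..p - 1}"
    have iS: "i \<in> S \<Longrightarrow> i < p" for i using k by (auto simp: S_def)
    define d where "d i = c (Suc i) / (2*real p - 2*real i)" for i
    define C where "C = (h j 0 - (\<Sum>i\<in>S. d i * tau i 0)) / tau p 0"
    define w where "w t = h j t - (\<Sum>i\<in>S. d i * tau i t) - C * tau p t" for t
    define w1 where "w1 t = H1 j t - (\<Sum>i\<in>S. d i * T1 i t) - C * T1 p t" for t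
    define w2 where "w2 t = H2 j t - (\<Sum>i\<in>S. d i * T2 i t) - C * T2 p t" for t
    have dw: "(w has_real_derivative w1 t) (at t)" if "\<bar>t\<bar> < \<epsilon>" for t
      unfolding w_def[abs_def] w1_def
      by (intro DERIV_diff DERIV_sum DERIV_cmult dh dT0 that)
    have dw1: "(w1 has_real_derivative w2 t) (at t)" if "\<bar>t\<bar> < \<epsilon>" for t
      unfolding w1_def[abs_def] w2_def
      by (intro DERIV_diff DERIV_sum DERIV_cmult dH dT1 that)
    have w0: "w 0 = 0"
      unfolding w_def C_def using tau_0_nz[of p] by simp
    have ode: "t * w2 t + real (2*p) * w1 t = t * w t" if t: "0 < t" "t < \<epsilon>" for t
    proof -
      have A: "t * H2 j t + 2*real p * H1 j t = t * (h j t - h (Suc j) t)"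
        using rec[OF t, of j] t by (simp add: field_simps)
      have B: "t * T2 i t + 2*real p * T1 i t = t * (tau i t - (2*real p - 2*real i) * tau (Suc i) t)" for i
        unfolding T1_def T2_def using tau_ode[of t i p] by simp
      have Csum: "(\<Sum>i\<in>S. d i * ((2*real p - 2*real i) * tau (Suc i) t)) = (\<Sum>i = p - m + 1..p. c i * tau i t)"
      proof -
        have "(\<Sum>i\<in>S. d i * ((2*real p - 2*real i) * tau (Suc i) t)) = (\<Sum>i\<in>S. c (Suc i) * tau (Suc i) t)"
        proof (rule sum.cong)
          fix i assume "i \<in> S"
          then have "2*real p - 2*real i \<noteq> 0" using iS by auto
          then show "d i * ((2*real p - 2*real i) * tau (Suc i) t) = c (Suc i) * tau (Suc i) t"
            by (simp add: d_def)
        qed simp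
        also have "\<dots> = (\<Sum>i = Suc (p - m)..Suc (p - 1). c i * tau i t)"
          unfolding S_def by (rule sum.shift_bounds_cl_Suc_ivl[symmetric])
        also have "Suc (p - 1) = p" using k by simp
        finally show ?thesis by simp
      qed
      have "t * w2 t + real (2*p) * w1 t = (t * H2 j t + 2*real p * H1 j t)
          - (\<Sum>i\<in>S. d i * (t * T2 i t + 2*real p * T1 i t)) - C * (t * T2 p t + 2*real p * T1 p t)"
        unfolding w1_def w2_def by (simp add: algebra_simps sum_distrib_left sum.distrib)
      also have "\<dots> = t * (h j t - h (Suc j) t)
          - (\<Sum>i\<in>S. d i * (t * (tau i t - (2*real p - 2*real i) * tau (Suc i) t))) - C * (t * tau p t)"
        unfolding A B by simp
      also have "\<dots> = t * w t - t * (h (Suc j) t - (\<Sum>i\<in>S. d i * ((2*real p - 2*real i) * tau (Suc i) t)))"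
        unfolding w_def by (simp add: algebra_simps sum_distrib_left sum.distrib sum_subtractf)
      also have "\<dots> = t * w t"
        unfolding Csum jS using c[of t] t by simp
      finally show ?thesis .
    qed
    have wz: "w t = 0" if "0 \<le> t" "t < \<epsilon>" for t
    proof (rule uniq[where w=w and a="2*p" and dw=w1 and ddw=w2 and \<epsilon>=\<epsilon>])
      show "1 \<le> 2*p" using k by simp
      show "isCont w1 0" using dw1[of 0] eps DERIV_isCont by auto
    qed (use dw dw1 ode w0 that in auto)
    define c' where "c' = d(p := C)"
    have "h (k - Suc m) t = (\<Sum>i = p - Suc m + 1..p. c' i * tau i t)" if "0 \<le> t" "t < \<epsilon>" for t
    proof -
      have e1: "Suc (p - Suc m) = p - m" using Suc.prems k by simp
      have "(\<Sum>i = p - m..p. c' i * tau i t) = (\<Sum>i = p - m..Suc (p - 1). c' i * tau i t)"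
        using k by simp
      also have "\<dots> = (\<Sum>i\<in>S. c' i * tau i t) + c' p * tau p t"
        using k by (simp only: sum.cl_ivl_Suc S_def) auto
      also have "(\<Sum>i\<in>S. c' i * tau i t) = (\<Sum>i\<in>S. d i * tau i t)"
        using iS by (intro sum.cong) (auto simp: c'_def)
      finally have "(\<Sum>i = p - m..p. c' i * tau i t) = (\<Sum>i\<in>S. d i * tau i t) + C * tau p t"
        by (simp add: c'_def)
      moreover have "h j t = (\<Sum>i\<in>S. d i * tau i t) + C * tau p t"
        using wz[OF that] by (simp add: w_def)
      ultimately show ?thesis by (simp add: e1 j_def)
    qed
    then show ?case by blast
  qed
  from claim[of k] show ?thesis using k by simp
qed



theorem theorem3p8:
  fixes p k :: nat and g :: "real^'n \<Rightarrow> real" and \<epsilon> :: real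
  assumes "p \<ge> 1" and "CARD('n) = 2 * p + 1"
    and "1 \<le> k" and "k \<le> p"
    and "\<epsilon> > 0"
    and "smooth_on (ball 0 \<epsilon>) g"
    and "\<exists>G :: real \<Rightarrow> real. \<forall>x \<in> ball 0 \<epsilon>. g x = G (norm x)"
    and "\<forall>x \<in> ball 0 \<epsilon>. (id_minus_lap ^^ k) g x = 0"
  shows "\<exists>c :: nat \<Rightarrow> real. \<forall>x \<in> ball 0 \<epsilon>.
           g x = (\<Sum>i = p - k + 1..p. c i * tau i (norm x))"
proof -
  note card = assms(2)
  define U where "U = ball (0::real^'n) \<epsilon>"
  have oU: "open U" by (simp add: U_def)
  obtain G where G: "\<And>x. x \<in> U \<Longrightarrow> g x = G (norm x)" using assms(7) by (auto simp: U_def)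
  obtain j0 :: 'n where "True" by blast
  define e where "e = axis j0 (1::real)"
  have ne: "norm e = 1" by (simp add: e_def)
  have inU: "t *\<^sub>R e \<in> U" if "\<bar>t\<bar> < \<epsilon>" for t
    using that ne by (simp add: U_def)
  have inU': "norm y *\<^sub>R e \<in> U" if "y \<in> U" for y
    using that ne by (simp add: U_def)
  have nn: "norm (norm y *\<^sub>R e) = norm y" for y :: "real^'n" using ne by simp
  define F where "F j = (id_minus_lap ^^ j) g" for j
  have sm: "smooth_on U (F j)" for j
    unfolding F_def by (rule smooth_iter[OF oU]) (use assms(6) in \<open>simp add: U_def\<close>)
  have FS: "F (Suc j) = id_minus_lap (F j)" for j by (simp add: F_def)
  have diffF: "F j differentiable (at x)" if "x \<in> U" for j x
  proof -
    have "Ck_on (Suc 0) U (F j)" using sm by (simp add: smooth_on_def del: Ck_on.simps)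
    then show ?thesis using that differentiable_on_eq_differentiable_at[OF oU] by auto
  qed
  have diffP: "partial j0 (F j) differentiable (at x)" if "x \<in> U" for j x
  proof -
    have "Ck_on (Suc (Suc 0)) U (F j)" using sm by (simp add: smooth_on_def del: Ck_on.simps)
    then show ?thesis using that differentiable_on_eq_differentiable_at[OF oU] by auto
  qed
  define h where "h j t = F j (t *\<^sub>R e)" for j t
  define H1 where "H1 j t = partial j0 (F j) (t *\<^sub>R e)" for j t
  define H2 where "H2 j t = partial j0 (partial j0 (F j)) (t *\<^sub>R e)" for j t
  have dh: "(h j has_real_derivative H1 j t) (at t)" if "\<bar>t\<bar> < \<epsilon>" for j t
    unfolding h_def[abs_def] H1_def e_def
    by (rule line_deriv) (use diffF inU[OF that] in \<open>simp add: e_def\<close>)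
  have dH: "(H1 j has_real_derivative H2 j t) (at t)" if "\<bar>t\<bar> < \<epsilon>" for j t
    unfolding H1_def[abs_def] H2_def e_def
    by (rule line_deriv) (use diffP inU[OF that] in \<open>simp add: e_def\<close>)
  have nU: "\<bar>norm y\<bar> < \<epsilon>" if "y \<in> U" for y using that by (simp add: U_def)
  have lap: "laplacian (F j) y = H2 j (norm y) + (real CARD('n) - 1) / norm y * H1 j (norm y)"
    if rj: "\<And>y. y \<in> U \<Longrightarrow> F j y = h j (norm y)" and y: "y \<in> U" "y \<noteq> 0" for j y
    by (rule lap_radial[where f="F j" and h="h j", OF oU y rj]) (auto intro!: dh dH nU y)
  have rad: "\<And>y. y \<in> U \<Longrightarrow> F j y = h j (norm y)" for j
  proof (induction j)
    case 0
    then show ?case using G inU'[OF 0] ne by (simp add: F_def h_def)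
  next
    case (Suc j)
    show ?case
    proof (cases "y = 0")
      case True
      then show ?thesis by (simp add: h_def)
    next
      case False
      have y': "norm y *\<^sub>R e \<in> U" "norm y *\<^sub>R e \<noteq> 0" using inU'[OF Suc.prems] False ne by auto
      have "F (Suc j) y = F j y - laplacian (F j) y" by (simp add: FS id_minus_lap_def)
      also have "\<dots> = h j (norm y) - (H2 j (norm y) + (real CARD('n) - 1) / norm y * H1 j (norm y))"
        using lap[OF Suc.IH Suc.prems False] Suc.IH[OF Suc.prems] by simp
      also have "\<dots> = F j (norm y *\<^sub>R e) - laplacian (F j) (norm y *\<^sub>R e)"
        using lap[OF Suc.IH y'] Suc.IH[OF y'(1)] ne by simp
      also have "\<dots> = h (Suc j) (norm y)" by (simp add: h_def FS id_minus_lap_def)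
      finally show ?thesis .
    qed
  qed
  have rec: "h (Suc j) t = h j t - H2 j t - (2*real p) / t * H1 j t" if t: "0 < t" "t < \<epsilon>" for j t
  proof -
    have y: "t *\<^sub>R e \<in> U" "t *\<^sub>R e \<noteq> 0" using inU[of t] t ne by auto
    have nt: "norm (t *\<^sub>R e) = t" using ne t by simp
    have "h (Suc j) t = F j (t *\<^sub>R e) - laplacian (F j) (t *\<^sub>R e)"
      by (simp add: h_def FS id_minus_lap_def)
    also have "\<dots> = h j t - (H2 j t + (real CARD('n) - 1) / t * H1 j t)"
      using lap[OF rad y] nt by (simp add: h_def)
    also have "real CARD('n) - 1 = 2 * real p" using card by simp
    finally show ?thesis by simp
  qed
  have hk: "h k t = 0" if "0 \<le> t" "t < \<epsilon>" for t
    using assms(8) inU[of t] that by (simp add: h_def F_def U_def)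
  obtain c where c: "\<And>t. 0 \<le> t \<Longrightarrow> t < \<epsilon> \<Longrightarrow> h 0 t = (\<Sum>i = p - k + 1..p. c i * tau i t)"
    using assemble[OF assms(3,4,5) dh dH rec hk] by blast
  have "\<forall>x\<in>ball 0 \<epsilon>. g x = (\<Sum>i = p - k + 1..p. c i * tau i (norm x))"
  proof
    fix x :: "real^'n" assume x: "x \<in> ball 0 \<epsilon>"
    have "g x = F 0 x" by (simp add: F_def)
    also have "\<dots> = h 0 (norm x)" using rad x by (simp add: U_def)
    also have "\<dots> = (\<Sum>i = p - k + 1..p. c i * tau i (norm x))" using c x by simp
    finally show "g x = (\<Sum>i = p - k + 1..p. c i * tau i (norm x))" .
  qed
  then show ?thesis by blast
qed


end
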